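(* Let $\mathbf A\in\mathbb C^{n\times n}$ be a symmetric adjacency matrix with loopy Laplacian $\mathbf Q$, voltages $\mathbf V$, currents $\mathbf C=\mathbf Q\mathbf V$ and power injections $\mathbf S=\mathbf V\circ\overline{\mathbf C}$, defining a connected network satisfying Hypothesis 1 and Hypothesis 2, and suppose the nodes $\{b_{n-2},b_{n-1},b_n\}$ form a triangle (are pairwise joined by lines). Let $\alpha=\{1,\dots,n-3\}$, let $\mathbf e_j\in\mathbb R^{n-3}$ be the $j$-th standard basis vector, and define the linear aggregation of the triangle by $$\mathbf Q^{\rm tri}=\begin{pmatrix}\mathbf Q_{[\alpha,\alpha]} & \sum_{i=n-2}^n\sum_{j=1}^{n-3}\mathbf e_jQ_{i,j}\\ \sum_{i=n-2}^n\sum_{j=1}^{n-3}\mathbf e_j^{\mathrm T}Q_{i,j} & \sum_{i,j=n-2}^nQ_{i,j}\end{pmatrix},\quad \mathbf C^{\rm tri}=\begin{pmatrix}\mathbf C_{[\alpha]}\\ \sum_{j=n-2}^nC_j\end{pmatrix},$$ $\mathbf V^{\rm tri}=(\mathbf Q^{\rm tri})^{-1}\mathbf C^{\rm tri}$ and $\mathbf S^{\rm tri}=\mathbf V^{\rm tri}\circ\overline{\mathbf C^{\rm tri}}$. Then: (i) $\mathbf Q^{\rm tri}\in\mathbb C^{(n-2)\times(n-2)}$ is an invertible loopy Laplacian, so $\mathbf V^{\rm tri}$ and $\mathbf S^{\rm tri}$ are well defined; (ii) the network defined by $\mathbf Q^{\rm tri}$ (with currents $\mathbf C^{\rm tri}$,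 voltages $\mathbf V^{\rm tri}$ and power injections $\mathbf S^{\rm tri}$) satisfies Hypothesis 1 and Hypothesis 2; (iii) the triangle-reduced adjacency matrix $\mathbf A^{\rm tri}$, given by $A^{\rm tri}_{i,j}=-Q^{\rm tri}_{i,j}$ ($i\ne j$) and $A^{\rm tri}_{i,i}=\sum_kQ^{\rm tri}_{i,k}$, satisfies, for $1\le i\le n-3$, $A^{\rm tri}_{i,n-2}\ne0$ if and only if $A_{i,k}\ne0$ for some $k\in\{n-2,n-1,n\}$.
   Context: For $i\ne j$, $A_{i,j}$ is the admittance of line $\{b_i,b_j\}$ (present iff $A_{i,j}\ne0$), $A_{i,i}$ the shunt admittance. Loopy Laplacian of an adjacency matrix: $Q_{i,j}=-A_{i,j}$ ($i\ne j$), $Q_{i,i}=\sum_kA_{i,k}$; a matrix is a loopy Laplacian if it arises this way from a symmetric adjacency matrix. $\mathbf Q_{[\alpha,\alpha]}$ is the block with rows and columns in $\alpha$, and $\mathbf C_{[\alpha]}$ the subvector indexed by $\alpha$. Hypothesis 1: the graph of lines is connected, every nonzero entry of the adjacency matrix is purely imaginary with negative imaginary part, and some diagonal entry is nonzero. Hypothesis 2: lossless power-flow with the sum of all power injections equal to $0$, where power injections are $\mathbf V\circ\overline{\mathbf C}$ ($\circ$ entrywise product, bar complex conjugation). *)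

theory Defs
  imports Complex_Main "Jordan_Normal_Form.Matrix" "Jordan_Normal_Form.Gauss_Jordan_Elimination"
begin

text \<open>Nodes b_1..b_n are represented by the indices 0..n-1.\<close>

definition loopy_laplacian :: "complex mat \<Rightarrow> complex mat" where
  "loopy_laplacian A = mat (dim_row A) (dim_col A)
     (\<lambda>(i,j). if i = j then (\<Sum>k<dim_col A. A $$ (i,k)) else - A $$ (i,j))"

definition sym_mat :: "complex mat \<Rightarrow> bool" where
  "sym_mat A \<longleftrightarrow> A\<^sup>T = A"

definition is_loopy_laplacian :: "complex mat \<Rightarrow> bool" where
  "is_loopy_laplacian Q \<longleftrightarrow>
     (\<exists>A. A \<in> carrier_mat (dim_row Q) (dim_row Q) \<and> sym_mat A \<and> Q = loopy_laplacian A)"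

definition adj_of_laplacian :: "complex mat \<Rightarrow> complex mat" where
  "adj_of_laplacian Q = mat (dim_row Q) (dim_col Q)
     (\<lambda>(i,j). if i = j then (\<Sum>k<dim_col Q. Q $$ (i,k)) else - Q $$ (i,j))"

definition line :: "complex mat \<Rightarrow> nat \<Rightarrow> nat \<Rightarrow> bool" where
  "line A i j \<longleftrightarrow> i < dim_row A \<and> j < dim_row A \<and> i \<noteq> j \<and> A $$ (i,j) \<noteq> 0"

definition connected_network :: "complex mat \<Rightarrow> bool" where
  "connected_network A \<longleftrightarrow>
     (\<forall>i<dim_row A. \<forall>j<dim_row A. (line A)\<^sup>*\<^sup>* i j)"

definition hyp1 :: "complex mat \<Rightarrow> bool" where
  "hyp1 A \<longleftrightarrow> connected_network A
     \<and> (\<forall>i<dim_row A. \<forall>j<dim_row A. A $$ (i,j) \<noteq> 0 \<longrightarrow>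
            Re (A $$ (i,j)) = 0 \<and> Im (A $$ (i,j)) < 0)
     \<and> (\<exists>i<dim_row A. A $$ (i,i) \<noteq> 0)"

definition hyp2 :: "complex mat \<Rightarrow> complex vec \<Rightarrow> complex vec \<Rightarrow> bool" where
  "hyp2 Q V C \<longleftrightarrow> C = Q *\<^sub>v V \<and> (\<Sum>i<dim_vec V. V $ i * cnj (C $ i)) = 0"

text \<open>Triangle aggregation of the last three nodes (indices n-3, n-2, n-1).\<close>
definition Q_tri :: "nat \<Rightarrow> complex mat \<Rightarrow> complex mat" where
  "Q_tri n Q = mat (n-2) (n-2) (\<lambda>(i,j).
      if i < n-3 \<and> j < n-3 then Q $$ (i,j)
      else if i < n-3 then (\<Sum>k\<in>{n-3..<n}. Q $$ (k,i))
      else if j < n-3 then (\<Sum>k\<in>{n-3..<n}. Q $$ (k,j))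
      else (\<Sum>k\<in>{n-3..<n}. \<Sum>l\<in>{n-3..<n}. Q $$ (k,l)))"

definition C_tri :: "nat \<Rightarrow> complex vec \<Rightarrow> complex vec" where
  "C_tri n C = vec (n-2) (\<lambda>i. if i < n-3 then C $ i else (\<Sum>k\<in>{n-3..<n}. C $ k))"

end

theory Submission
  imports Defs "Jordan_Normal_Form.Determinant"
begin

lemma sym_entry:
  assumes "A \<in> carrier_mat n n" "sym_mat A" "i<n" "j<n"
  shows "A $$ (i,j) = A $$ (j,i)"
proof -
  have "A\<^sup>T $$ (i,j) = A $$ (i,j)" using assms(2) by (simp add: sym_mat_def)
  then show ?thesis using assms by simp
qed

lemma ll_carrier: "A \<in> carrier_mat n n \<Longrightarrow> loopy_laplacian A \<in> carrier_mat n n"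
  by (auto simp: loopy_laplacian_def)

lemma ll_entry:
  assumes "A \<in> carrier_mat n n" "i<n" "j<n"
  shows "loopy_laplacian A $$ (i,j) =
    (if i = j then (\<Sum>k<n. A $$ (i,k)) + A $$ (i,i) else 0) - A $$ (i,j)"
  using assms by (auto simp: loopy_laplacian_def)

lemma ll_mult:
  assumes A: "A \<in> carrier_mat n n" and x: "x \<in> carrier_vec n" and i: "i<n"
  shows "(loopy_laplacian A *\<^sub>v x) $ i = A $$ (i,i) * x $ i + (\<Sum>j<n. A $$ (i,j) * (x $ i - x $ j))"
proof -
  have "(loopy_laplacian A *\<^sub>v x) $ i = (\<Sum>j<n. loopy_laplacian A $$ (i,j) * x $ j)"
    using A x i ll_carrier[OF A] by (auto simp: scalar_prod_def atLeast0LessThan)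
  also have "\<dots> = (\<Sum>j<n. ((if i = j then (\<Sum>k<n. A $$ (i,k)) + A $$ (i,i) else 0) - A $$ (i,j)) * x $ j)"
    using ll_entry[OF A i] by auto
  also have "\<dots> = ((\<Sum>k<n. A $$ (i,k)) + A $$ (i,i)) * x $ i - (\<Sum>j<n. A $$ (i,j) * x $ j)"
  proof -
    have e: "\<And>j. ((if i = j then (\<Sum>k<n. A $$ (i,k)) + A $$ (i,i) else 0) - A $$ (i,j)) * x $ j
      = (if i = j then ((\<Sum>k<n. A $$ (i,k)) + A $$ (i,i)) * x $ i else 0) - A $$ (i,j) * x $ j"
      by (simp add: left_diff_distrib)
    show ?thesis unfolding e sum_subtractf using i by (simp add: sum.delta')
  qed
  also have "\<dots> = A $$ (i,i) * x $ i + (\<Sum>j<n. A $$ (i,j) * (x $ i - x $ j))"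
    by (simp add: right_diff_distrib sum_subtractf sum_distrib_left algebra_simps)
  finally show ?thesis .
qed

lemma adj_ll:
  assumes A: "A \<in> carrier_mat n n"
  shows "adj_of_laplacian (loopy_laplacian A) = A"
proof (rule eq_matI)
  fix i j assume i: "i < dim_row A" and j: "j < dim_col A"
  show "adj_of_laplacian (loopy_laplacian A) $$ (i, j) = A $$ (i, j)"
  proof (cases "i = j")
    case True
    have "(\<Sum>k<n. loopy_laplacian A $$ (i,k)) =
      (\<Sum>k<n. (if i = k then (\<Sum>k<n. A $$ (i,k)) + A $$ (i,i) else 0) - A $$ (i,k))"
      using ll_entry[OF A] i A by (intro sum.cong) auto
    also have "\<dots> = A $$ (i,i)" using i A by (simp add: sum_subtractf sum.delta)
    finally show ?thesis using True i A ll_carrier[OF A] by (simp add: adj_of_laplacian_def)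
  next
    case False
    then show ?thesis using i j A by (simp add: adj_of_laplacian_def loopy_laplacian_def)
  qed
qed (use A in \<open>auto simp: adj_of_laplacian_def loopy_laplacian_def\<close>)

lemma hyp1_sign:
  assumes "hyp1 A" "A \<in> carrier_mat n n" "i<n" "j<n"
  shows "Re (A $$ (i,j)) = 0 \<and> Im (A $$ (i,j)) \<le> 0"
proof (cases "A $$ (i,j) = 0")
  case False
  then show ?thesis using assms by (force simp: hyp1_def)
qed simp

lemma nim_sum:
  assumes "finite S" "\<And>k. k \<in> S \<Longrightarrow> Re (f k) = 0 \<and> Im (f k) \<le> 0"
  shows "Re (sum f S) = 0" "Im (sum f S) \<le> 0" "sum f S \<noteq> 0 \<longleftrightarrow> (\<exists>k\<in>S. f k \<noteq> 0)"
proof -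
  show r: "Re (sum f S) = 0" using assms by (simp add: Re_sum)
  show "Im (sum f S) \<le> 0" using assms by (simp add: Im_sum sum_nonpos)
  have "sum f S = 0 \<longleftrightarrow> Im (sum f S) = 0" using r by (simp add: complex_eq_iff)
  also have "\<dots> \<longleftrightarrow> (\<Sum>k\<in>S. - Im (f k)) = 0" by (simp add: Im_sum sum_negf)
  also have "\<dots> \<longleftrightarrow> (\<forall>k\<in>S. - Im (f k) = 0)" using assms by (intro sum_nonneg_eq_0_iff) auto
  also have "\<dots> \<longleftrightarrow> (\<forall>k\<in>S. f k = 0)" using assms by (auto simp: complex_eq_iff)
  finally show "sum f S \<noteq> 0 \<longleftrightarrow> (\<exists>k\<in>S. f k \<noteq> 0)" by blast
qed

lemma qf_zero:
  assumes A: "A \<in> carrier_mat n n" and s: "sym_mat A" and h: "hyp1 A" and x: "x \<in> carrier_vec n"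
    and z: "(\<Sum>i<n. cnj (x $ i) * (loopy_laplacian A *\<^sub>v x) $ i) = 0"
  shows "x = 0\<^sub>v n"
proof -
  have sg: "\<And>i j. i<n \<Longrightarrow> j<n \<Longrightarrow> Re (A $$ (i,j)) = 0 \<and> Im (A $$ (i,j)) \<le> 0"
    using hyp1_sign[OF h A] by blast
  have cx: "\<And>z. cnj z * z = of_real ((cmod z)^2)" by (metis complex_norm_square mult.commute)
  define D where "D = (\<Sum>i<n. A $$ (i,i) * of_real ((cmod (x $ i))^2))"
  define P where "P = (\<Sum>i<n. \<Sum>j<n. A $$ (i,j) * (cnj (x $ i) * (x $ i - x $ j)))"
  have "(\<Sum>i<n. cnj (x $ i) * (loopy_laplacian A *\<^sub>v x) $ i) =
     (\<Sum>i<n. A $$ (i,i) * (cnj (x $ i) * x $ i) + (\<Sum>j<n. A $$ (i,j) * (cnj (x $ i) * (x $ i - x $ j))))"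
    using ll_mult[OF A x] by (intro sum.cong) (auto simp: distrib_left sum_distrib_left mult_ac)
  also have "\<dots> = D + P" by (simp add: sum.distrib D_def P_def cx)
  finally have DP: "D + P = 0" using z by simp
  have P1: "P = (\<Sum>j<n. \<Sum>i<n. A $$ (i,j) * (cnj (x $ i) * (x $ i - x $ j)))"
    unfolding P_def by (rule sum.swap)
  also have "\<dots> = (\<Sum>i<n. \<Sum>j<n. A $$ (i,j) * (cnj (x $ j) * (x $ j - x $ i)))"
    using sym_entry[OF A s] by (intro sum.cong) auto
  finally have P2: "P = \<dots>" .
  have "2 * P = P + P" by simp
  also have "\<dots> = (\<Sum>i<n. \<Sum>j<n. A $$ (i,j) * (cnj (x $ i) * (x $ i - x $ j) + cnj (x $ j) * (x $ j - x $ i)))"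
    by (subst P2) (simp add: P_def sum.distrib[symmetric] distrib_left)
  also have "\<dots> = (\<Sum>i<n. \<Sum>j<n. A $$ (i,j) * of_real ((cmod (x $ i - x $ j))^2))"
  proof -
    have e: "\<And>a b. cnj a * (a - b) + cnj b * (b - a) = cnj (a - b) * (a - b)"
      by (simp add: algebra_simps)
    show ?thesis by (simp only: e cx)
  qed
  finally have P3: "2 * P = \<dots>" .
  define dd where "dd i = - Im (A $$ (i,i)) * (cmod (x $ i))^2" for i
  define pp where "pp i j = - Im (A $$ (i,j)) * (cmod (x $ i - x $ j))^2" for i j
  have "2 * D + 2 * P = 0" using DP by (metis distrib_left mult_zero_right)
  then have "Im (2 * D + 2 * P) = 0" by simp
  then have "2 * (\<Sum>i<n. dd i) + (\<Sum>i<n. \<Sum>j<n. pp i j) = 0"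
    unfolding P3 by (simp add: D_def dd_def pp_def Im_sum sum_negf)
  moreover have d0: "\<And>i. i<n \<Longrightarrow> dd i \<ge> 0" using sg unfolding dd_def
    by (simp add: mult_nonpos_nonneg)
  moreover have p0: "\<And>i j. i<n \<Longrightarrow> j<n \<Longrightarrow> pp i j \<ge> 0" using sg unfolding pp_def
    by (simp add: mult_nonpos_nonneg)
  ultimately have "(\<Sum>i<n. dd i) = 0" "(\<Sum>i<n. \<Sum>j<n. pp i j) = 0"
    using sum_nonneg[of "{..<n}" dd] sum_nonneg[of "{..<n}" "\<lambda>i. \<Sum>j<n. pp i j"] sum_nonneg[of "{..<n}" "pp _"]
    by (smt (verit) lessThan_iff)+
  then have dz: "\<And>i. i<n \<Longrightarrow> dd i = 0" and pz: "\<And>i j. i<n \<Longrightarrow> j<n \<Longrightarrow> pp i j = 0"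
  proof -
    show "\<And>i. i<n \<Longrightarrow> dd i = 0" using \<open>(\<Sum>i<n. dd i) = 0\<close> d0
      by (subst (asm) sum_nonneg_eq_0_iff) auto
    have "\<forall>i\<in>{..<n}. (\<Sum>j<n. pp i j) = 0" using \<open>(\<Sum>i<n. \<Sum>j<n. pp i j) = 0\<close> p0
      by (subst (asm) sum_nonneg_eq_0_iff) (auto intro: sum_nonneg)
    then show "\<And>i j. i<n \<Longrightarrow> j<n \<Longrightarrow> pp i j = 0"
    proof -
      fix i j assume ij: "i<n" "j<n"
      then have "sum (pp i) {..<n} = 0" using \<open>\<forall>i\<in>{..<n}. (\<Sum>j<n. pp i j) = 0\<close> by auto
      then have "\<forall>j\<in>{..<n}. pp i j = 0" using p0 ij by (subst (asm) sum_nonneg_eq_0_iff) auto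
      then show "pp i j = 0" using ij by auto
    qed
  qed
  have neg: "\<And>i j. i<n \<Longrightarrow> j<n \<Longrightarrow> A $$ (i,j) \<noteq> 0 \<Longrightarrow> Im (A $$ (i,j)) < 0"
    using sg by (metis complex_eq_iff order_le_less zero_complex.sel(1) zero_complex.sel(2))
  have edge: "x $ i = x $ j" if "line A i j" for i j
  proof -
    from that A have ij: "i<n" "j<n" "A $$ (i,j) \<noteq> 0" by (auto simp: line_def)
    have "pp i j = 0" using pz ij by auto
    with neg[OF ij] show ?thesis unfolding pp_def by simp
  qed
  from h A obtain i0 where i0: "i0 < n" "A $$ (i0,i0) \<noteq> 0" by (auto simp: hyp1_def)
  have "dd i0 = 0" using dz i0 by auto
  with neg[OF i0(1) i0(1) i0(2)] have x0: "x $ i0 = 0" unfolding dd_def by simp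
  have conn: "\<And>j. j<n \<Longrightarrow> (line A)\<^sup>*\<^sup>* i0 j" using h A i0 by (auto simp: hyp1_def connected_network_def)
  have "x $ j = 0" if "j<n" for j
  proof -
    have "(line A)\<^sup>*\<^sup>* i0 j" using conn that by auto
    then have "x $ i0 = x $ j"
      by (induction rule: rtranclp_induct) (auto dest: edge)
    then show ?thesis using x0 by simp
  qed
  then show ?thesis using x by (intro eq_vecI) auto
qed

lemma inv_lemma:
  assumes Q: "(Q :: complex mat) \<in> carrier_mat k k"
    and ker: "\<And>x. x \<in> carrier_vec k \<Longrightarrow> Q *\<^sub>v x = 0\<^sub>v k \<Longrightarrow> x = 0\<^sub>v k"
  shows "invertible_mat Q \<and> (\<exists>B. mat_inverse Q = Some B \<and> B \<in> carrier_mat k k)"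
proof -
  have "det Q \<noteq> 0" using det_0_iff_vec_prod_zero[OF Q] ker by blast
  then have U: "Q \<in> Units (ring_mat TYPE(complex) k k)" by (rule det_non_zero_imp_unit[OF Q])
  have "mat_inverse Q \<noteq> None" using mat_inverse(1)[OF Q, of k] U by blast
  then obtain B where B: "mat_inverse Q = Some B" by auto
  from mat_inverse(2)[OF Q B] have QB: "Q * B = 1\<^sub>m k" "B * Q = 1\<^sub>m k" "B \<in> carrier_mat k k" by auto
  have "invertible_mat Q" unfolding invertible_mat_def inverts_mat_def square_mat.simps
    using QB Q by auto
  then show ?thesis using B QB by auto
qed

lemma T3: "{m..<m+3} = {m, Suc m, Suc (Suc m)}" by auto

lemma tri_eq:
  fixes A :: "complex mat"
  assumes Acar: "A \<in> carrier_mat (m+3) (m+3)" and s: "sym_mat A"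
  defines "T \<equiv> {m..<m+3}"
  defines "At \<equiv> mat (m+1) (m+1) (\<lambda>(i,j). if i<m \<and> j<m then A $$ (i,j)
      else if i<m then (\<Sum>k\<in>T. A $$ (i,k)) else if j<m then (\<Sum>k\<in>T. A $$ (k,j))
      else (\<Sum>k\<in>T. A $$ (k,k)))"
  shows "Q_tri (m+3) (loopy_laplacian A) = loopy_laplacian At"
proof (rule eq_matI)
  let ?Q = "loopy_laplacian A"
  have symA: "\<And>i j. i<m+3 \<Longrightarrow> j<m+3 \<Longrightarrow> A $$ (i,j) = A $$ (j,i)" using sym_entry[OF Acar s] by blast
  have Qe: "\<And>k l. k<m+3 \<Longrightarrow> l<m+3 \<Longrightarrow> ?Q $$ (k,l) = (if k = l then (\<Sum>j<m+3. A $$ (k,j)) + A $$ (k,k) else 0) - A $$ (k,l)"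
    using ll_entry[OF Acar] by blast
  have Tsum: "\<And>f. (\<Sum>k\<in>T. f k) = f m + f (Suc m) + f (Suc (Suc m))" by (simp add: T_def T3 add.assoc)
  have full: "\<And>f. (\<Sum>k<m+3. f k) = (\<Sum>k<m. f k) + f m + f (Suc m) + f (Suc (Suc m))"
    by (simp add: numeral_3_eq_3)
  have Ate: "\<And>i j. i<m+1 \<Longrightarrow> j<m+1 \<Longrightarrow> At $$ (i,j) = (if i<m \<and> j<m then A $$ (i,j)
      else if i<m then (\<Sum>k\<in>T. A $$ (i,k)) else if j<m then (\<Sum>k\<in>T. A $$ (k,j))
      else (\<Sum>k\<in>T. A $$ (k,k)))" unfolding At_def by simp
  have Atc: "At \<in> carrier_mat (m+1) (m+1)" unfolding At_def by simp
  fix i j assume i: "i < dim_row (loopy_laplacian At)" and j: "j < dim_col (loopy_laplacian At)"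
  then have i: "i < m+1" and j: "j < m+1" using ll_carrier[OF Atc] by auto
  have Lt: "loopy_laplacian At $$ (i,j) = (if i = j then (\<Sum>k<m. At $$ (i,k)) + At $$ (i,m) else - At $$ (i,j))"
    using i j Atc by (simp add: loopy_laplacian_def)
  have Qt: "Q_tri (m+3) ?Q $$ (i,j) = (if i < m \<and> j < m then ?Q $$ (i,j)
      else if i < m then (\<Sum>k\<in>T. ?Q $$ (k,i))
      else if j < m then (\<Sum>k\<in>T. ?Q $$ (k,j))
      else (\<Sum>k\<in>T. \<Sum>l\<in>T. ?Q $$ (k,l)))"
    using i j by (simp add: Q_tri_def T_def)
  consider "i<m" "j<m" | "i<m" "j=m" | "i=m" "j<m" | "i=m" "j=m" using i j by linarith
  then show "Q_tri (m+3) ?Q $$ (i,j) = loopy_laplacian At $$ (i,j)"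
  proof cases
    case 1
    then show ?thesis unfolding Qt Lt using Ate Qe by (auto simp: sum.distrib Tsum full)
  next
    case 2
    then show ?thesis unfolding Qt Lt using Ate Qe symA by (auto simp: Tsum full)
  next
    case 3
    then show ?thesis unfolding Qt Lt using Ate Qe symA by (auto simp: Tsum full)
  next
    case 4
    have e: "(\<Sum>k<m. At $$ (m,k)) = (\<Sum>k<m. A $$ (m,k)) + (\<Sum>k<m. A $$ (Suc m,k)) + (\<Sum>k<m. A $$ (Suc (Suc m),k))"
      using Ate by (simp add: sum.distrib Tsum)
    show ?thesis unfolding Qt Lt using 4 e Ate Qe by (simp add: Tsum full)
  qed
qed (auto simp: Q_tri_def At_def loopy_laplacian_def)

lemma tri_props:
  fixes A :: "complex mat"
  assumes Acar: "A \<in> carrier_mat (m+3) (m+3)" and s: "sym_mat A" and h: "hyp1 A"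
  defines "T \<equiv> {m..<m+3}"
  defines "At \<equiv> mat (m+1) (m+1) (\<lambda>(i,j). if i<m \<and> j<m then A $$ (i,j)
      else if i<m then (\<Sum>k\<in>T. A $$ (i,k)) else if j<m then (\<Sum>k\<in>T. A $$ (k,j))
      else (\<Sum>k\<in>T. A $$ (k,k)))"
  shows "sym_mat At" "hyp1 At"
proof -
  have symA: "\<And>i j. i<m+3 \<Longrightarrow> j<m+3 \<Longrightarrow> A $$ (i,j) = A $$ (j,i)" using sym_entry[OF Acar s] by blast
  have sg: "\<And>i j. i<m+3 \<Longrightarrow> j<m+3 \<Longrightarrow> Re (A $$ (i,j)) = 0 \<and> Im (A $$ (i,j)) \<le> 0"
    using hyp1_sign[OF h Acar] by blast
  have Ate: "\<And>i j. i<m+1 \<Longrightarrow> j<m+1 \<Longrightarrow> At $$ (i,j) = (if i<m \<and> j<m then A $$ (i,j)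
      else if i<m then (\<Sum>k\<in>T. A $$ (i,k)) else if j<m then (\<Sum>k\<in>T. A $$ (k,j))
      else (\<Sum>k\<in>T. A $$ (k,k)))" unfolding At_def by simp
  have Atc: "At \<in> carrier_mat (m+1) (m+1)" unfolding At_def by simp
  have fT: "finite T" and Tb: "\<And>k. k \<in> T \<Longrightarrow> k < m+3" and Tm: "\<And>k. k \<in> T \<Longrightarrow> m \<le> k"
    by (auto simp: T_def)
  show "sym_mat At" unfolding sym_mat_def
  proof (rule eq_matI)
    fix i j assume "i < dim_row At" "j < dim_col At"
    then have ij: "i < m+1" "j < m+1" using Atc by auto
    have t: "At\<^sup>T $$ (i,j) = At $$ (j,i)" using ij Atc by simp
    have s1: "(\<Sum>k\<in>T. A $$ (k,i)) = (\<Sum>k\<in>T. A $$ (i,k))" if "i < m" using that Tb symA[of i]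
      by (intro sum.cong) auto
    have s2: "(\<Sum>k\<in>T. A $$ (k,j)) = (\<Sum>k\<in>T. A $$ (j,k))" if "j < m" using that Tb symA[of j]
      by (intro sum.cong) auto
    consider "i<m" "j<m" | "i<m" "j=m" | "i=m" "j<m" | "i=m" "j=m" using ij by linarith
    then show "At\<^sup>T $$ (i,j) = At $$ (i,j)"
    proof cases
      case 1 then show ?thesis unfolding t Ate[OF ij] Ate[OF ij(2) ij(1)] using symA[of i j] by simp
    next
      case 2 then show ?thesis unfolding t Ate[OF ij] Ate[OF ij(2) ij(1)] using s1 by simp
    next
      case 3 then show ?thesis unfolding t Ate[OF ij] Ate[OF ij(2) ij(1)] using s2 by simp
    next
      case 4 then show ?thesis unfolding t by simp
    qed
  qed (use Atc in auto)
  have sgT: "Re (At $$ (i,j)) = 0 \<and> Im (At $$ (i,j)) \<le> 0" if ij: "i<m+1" "j<m+1" for i j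
  proof -
    have a: "\<And>k. k\<in>T \<Longrightarrow> Re (A $$ (i,k)) = 0 \<and> Im (A $$ (i,k)) \<le> 0" using sg ij Tb by simp
    have b: "\<And>k. k\<in>T \<Longrightarrow> Re (A $$ (k,j)) = 0 \<and> Im (A $$ (k,j)) \<le> 0" using sg ij Tb by simp
    have c: "\<And>k. k\<in>T \<Longrightarrow> Re (A $$ (k,k)) = 0 \<and> Im (A $$ (k,k)) \<le> 0" using sg Tb by simp
    have ra: "Re (\<Sum>k\<in>T. A $$ (i,k)) = 0 \<and> Im (\<Sum>k\<in>T. A $$ (i,k)) \<le> 0"
      using nim_sum(1,2)[OF fT, of "\<lambda>k. A $$ (i,k)"] a by blast
    have rb: "Re (\<Sum>k\<in>T. A $$ (k,j)) = 0 \<and> Im (\<Sum>k\<in>T. A $$ (k,j)) \<le> 0"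
      using nim_sum(1,2)[OF fT, of "\<lambda>k. A $$ (k,j)"] b by blast
    have rc: "Re (\<Sum>k\<in>T. A $$ (k,k)) = 0 \<and> Im (\<Sum>k\<in>T. A $$ (k,k)) \<le> 0"
      using nim_sum(1,2)[OF fT, of "\<lambda>k. A $$ (k,k)"] c by blast
    show ?thesis unfolding Ate[OF ij] using sg ij ra rb rc by simp
  qed
  have nzT: "\<And>z. Re z = 0 \<Longrightarrow> Im z \<le> 0 \<Longrightarrow> z \<noteq> 0 \<Longrightarrow> Im z < 0"
    by (metis complex_eq_iff order_le_less zero_complex.sel(1) zero_complex.sel(2))
  have sign: "\<forall>i<dim_row At. \<forall>j<dim_row At. At $$ (i,j) \<noteq> 0 \<longrightarrow> Re (At $$ (i,j)) = 0 \<and> Im (At $$ (i,j)) < 0"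
  proof (intro allI impI)
    fix i j assume "i < dim_row At" "j < dim_row At" "At $$ (i,j) \<noteq> 0"
    then show "Re (At $$ (i,j)) = 0 \<and> Im (At $$ (i,j)) < 0" using sgT[of i j] nzT[of "At $$ (i,j)"] Atc by auto
  qed
  from h Acar obtain i0 where i0: "i0 < m+3" "A $$ (i0,i0) \<noteq> 0" by (auto simp: hyp1_def)
  have diag: "\<exists>i<dim_row At. At $$ (i,i) \<noteq> 0"
  proof (cases "i0 < m")
    case True
    then show ?thesis using Ate[of i0 i0] i0 Atc by (intro exI[of _ i0]) auto
  next
    case False
    then have "i0 \<in> T" using i0 by (auto simp: T_def)
    moreover have "\<And>k. k\<in>T \<Longrightarrow> Re (A $$ (k,k)) = 0 \<and> Im (A $$ (k,k)) \<le> 0" using sg Tb by simp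
    ultimately have "(\<Sum>k\<in>T. A $$ (k,k)) \<noteq> 0" using nim_sum(3)[OF fT, of "\<lambda>k. A $$ (k,k)"] i0 by blast
    then show ?thesis using Ate[of m m] Atc by (intro exI[of _ m]) auto
  qed
  have step: "(line At)\<^sup>*\<^sup>* (min i m) (min j m)" if l: "line A i j" for i j
  proof -
    from l Acar have ij: "i < m+3" "j < m+3" "i \<noteq> j" "A $$ (i,j) \<noteq> 0" by (auto simp: line_def)
    consider "i<m" "j<m" | "i<m" "\<not> j<m" | "\<not> i<m" "j<m" | "\<not> i<m" "\<not> j<m" by blast
    then show ?thesis
    proof cases
      case 1
      then have "line At i j" using ij Ate[of i j] Atc by (auto simp: line_def)
      then show ?thesis using 1 by auto
    next
      case 2
      have jT: "j \<in> T" using 2 ij by (auto simp: T_def)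
      have a: "\<And>k. k\<in>T \<Longrightarrow> Re (A $$ (i,k)) = 0 \<and> Im (A $$ (i,k)) \<le> 0" using sg ij Tb by simp
      have "(\<Sum>k\<in>T. A $$ (i,k)) \<noteq> 0" using nim_sum(3)[OF fT, of "\<lambda>k. A $$ (i,k)"] a jT ij by blast
      then have "line At i m" using 2 Ate[of i m] Atc by (auto simp: line_def)
      then show ?thesis using 2 by auto
    next
      case 3
      have iT: "i \<in> T" using 3 ij by (auto simp: T_def)
      have b: "\<And>k. k\<in>T \<Longrightarrow> Re (A $$ (k,j)) = 0 \<and> Im (A $$ (k,j)) \<le> 0" using sg ij Tb by simp
      have "(\<Sum>k\<in>T. A $$ (k,j)) \<noteq> 0" using nim_sum(3)[OF fT, of "\<lambda>k. A $$ (k,j)"] b iT ij by blast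
      then have "line At m j" using 3 Ate[of m j] Atc by (auto simp: line_def)
      then show ?thesis using 3 by auto
    next
      case 4
      then show ?thesis by auto
    qed
  qed
  have path: "(line At)\<^sup>*\<^sup>* (min i m) (min j m)" if "(line A)\<^sup>*\<^sup>* i j" for i j
    using that
  proof (induction rule: rtranclp_induct)
    case (step y z)
    then show ?case using \<open>\<And>i j. line A i j \<Longrightarrow> (line At)\<^sup>*\<^sup>* (min i m) (min j m)\<close>[OF step(2)] by (meson rtranclp_trans)
  qed auto
  have conn: "connected_network At" unfolding connected_network_def
  proof (intro allI impI)
    fix i j assume "i < dim_row At" "j < dim_row At"
    then have ij: "i < m+1" "j < m+1" using Atc by auto
    then have "(line A)\<^sup>*\<^sup>* i j" using h Acar by (auto simp: hyp1_def connected_network_def)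
    then have "(line At)\<^sup>*\<^sup>* (min i m) (min j m)" by (rule path)
    moreover have "min i m = i" "min j m = j" using ij by auto
    ultimately show "(line At)\<^sup>*\<^sup>* i j" by simp
  qed
  show "hyp1 At" unfolding hyp1_def using conn sign diag by blast
qed

theorem lemma2p14:
  fixes n :: nat and A :: "complex mat" and V :: "complex vec"
  assumes "n \<ge> 3"
    and "A \<in> carrier_mat n n" and "sym_mat A"
    and "V \<in> carrier_vec n"
    and "hyp1 A"
    and "hyp2 (loopy_laplacian A) V (loopy_laplacian A *\<^sub>v V)"
    and "A $$ (n-3, n-2) \<noteq> 0" and "A $$ (n-3, n-1) \<noteq> 0" and "A $$ (n-2, n-1) \<noteq> 0"
  shows "let Q = loopy_laplacian A; C = Q *\<^sub>v V;
             Qt = Q_tri n Q; Ct = C_tri n C;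
             Vt = the (mat_inverse Qt) *\<^sub>v Ct
         in Qt \<in> carrier_mat (n-2) (n-2) \<and> invertible_mat Qt \<and> is_loopy_laplacian Qt
            \<and> hyp1 (adj_of_laplacian Qt) \<and> hyp2 Qt Vt Ct
            \<and> (\<forall>i<n-3. adj_of_laplacian Qt $$ (i, n-3) \<noteq> 0 \<longleftrightarrow>
                        (\<exists>k\<in>{n-3..<n}. A $$ (i,k) \<noteq> 0))"
proof -
  obtain m where n: "n = m+3" using assms(1) by (metis add.commute le_Suc_ex)
  define T where "T = {m..<m+3}"
  define At where "At = mat (m+1) (m+1) (\<lambda>(i,j). if i<m \<and> j<m then A $$ (i,j)
      else if i<m then (\<Sum>k\<in>T. A $$ (i,k)) else if j<m then (\<Sum>k\<in>T. A $$ (k,j))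
      else (\<Sum>k\<in>T. A $$ (k,k)))"
  have Acar: "A \<in> carrier_mat (m+3) (m+3)" using assms(2) n by simp
  have QtE: "Q_tri n (loopy_laplacian A) = loopy_laplacian At"
    unfolding n At_def T_def by (rule tri_eq[OF Acar assms(3)])
  have symAt: "sym_mat At" unfolding At_def T_def by (rule tri_props(1)[OF Acar assms(3) assms(5)])
  have hypAt: "hyp1 At" unfolding At_def T_def by (rule tri_props(2)[OF Acar assms(3) assms(5)])
  have Atc: "At \<in> carrier_mat (m+1) (m+1)" unfolding At_def by simp
  define Qt where "Qt = Q_tri n (loopy_laplacian A)"
  have Qtc: "Qt \<in> carrier_mat (n-2) (n-2)" unfolding Qt_def by (simp add: Q_tri_def)
  have n2: "n - 2 = m + 1" "n - 3 = m" using n by auto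
  have adj: "adj_of_laplacian Qt = At" unfolding Qt_def QtE by (rule adj_ll[OF Atc])
  have isl: "is_loopy_laplacian Qt" unfolding is_loopy_laplacian_def
    using Atc symAt QtE Qtc n2 unfolding Qt_def by auto
  have ker: "x = 0\<^sub>v (n-2)" if x: "x \<in> carrier_vec (n-2)" and z: "Qt *\<^sub>v x = 0\<^sub>v (n-2)" for x
  proof -
    have x': "x \<in> carrier_vec (m+1)" using x n2 by simp
    have "(\<Sum>i<m+1. cnj (x $ i) * (loopy_laplacian At *\<^sub>v x) $ i) = 0"
      using z n2 unfolding Qt_def QtE by simp
    from qf_zero[OF Atc symAt hypAt x' this] show ?thesis using n2 by simp
  qed
  from inv_lemma[OF Qtc ker] obtain B where inv: "invertible_mat Qt" and B: "mat_inverse Qt = Some B"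
    "B \<in> carrier_mat (n-2) (n-2)" by blast
  from assms(6) have h2: "(\<Sum>i<n. V $ i * cnj ((loopy_laplacian A *\<^sub>v V) $ i)) = 0"
    using assms(4) by (simp add: hyp2_def)
  have "(\<Sum>i<n. cnj (V $ i) * (loopy_laplacian A *\<^sub>v V) $ i) = cnj (\<Sum>i<n. V $ i * cnj ((loopy_laplacian A *\<^sub>v V) $ i))"
    by (simp add: cnj_sum)
  also have "\<dots> = 0" using h2 by simp
  finally have "(\<Sum>i<m+3. cnj (V $ i) * (loopy_laplacian A *\<^sub>v V) $ i) = 0" using n by simp
  from qf_zero[OF Acar assms(3) assms(5) _ this] assms(4) n have V0: "V = 0\<^sub>v n" by simp
  have C0: "loopy_laplacian A *\<^sub>v V = 0\<^sub>v n" using V0 ll_carrier[OF assms(2)] by (intro eq_vecI) auto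
  have Ct0: "C_tri n (loopy_laplacian A *\<^sub>v V) = 0\<^sub>v (n-2)" unfolding C0
    by (intro eq_vecI) (auto simp: C_tri_def)
  have Vt0: "the (mat_inverse Qt) *\<^sub>v C_tri n (loopy_laplacian A *\<^sub>v V) = 0\<^sub>v (n-2)"
    unfolding Ct0 B(1) using B(2) by (intro eq_vecI) auto
  have h2t: "hyp2 Qt (the (mat_inverse Qt) *\<^sub>v C_tri n (loopy_laplacian A *\<^sub>v V)) (C_tri n (loopy_laplacian A *\<^sub>v V))"
  proof -
    have h2z: "hyp2 Qt (0\<^sub>v (n-2)) (0\<^sub>v (n-2))" unfolding hyp2_def using Qtc by (auto intro!: eq_vecI)
    show ?thesis by (subst Vt0, subst Ct0, rule h2z)
  qed
  have sg: "\<And>i j. i<m+3 \<Longrightarrow> j<m+3 \<Longrightarrow> Re (A $$ (i,j)) = 0 \<and> Im (A $$ (i,j)) \<le> 0"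
    using hyp1_sign[OF assms(5) Acar] by blast
  have iii: "adj_of_laplacian Qt $$ (i, n-3) \<noteq> 0 \<longleftrightarrow> (\<exists>k\<in>{n-3..<n}. A $$ (i,k) \<noteq> 0)" if i: "i < n-3" for i
  proof -
    have "adj_of_laplacian Qt $$ (i, n-3) = (\<Sum>k\<in>T. A $$ (i,k))"
      unfolding adj n2 using i n2 by (simp add: At_def)
    moreover have "{n-3..<n} = T" unfolding T_def n by simp
    moreover have "(\<Sum>k\<in>T. A $$ (i,k)) \<noteq> 0 \<longleftrightarrow> (\<exists>k\<in>T. A $$ (i,k) \<noteq> 0)"
      using nim_sum(3)[of T "\<lambda>k. A $$ (i,k)"] sg i n by (auto simp: T_def)
    ultimately show ?thesis by simp
  qed
  show ?thesis unfolding Let_def Qt_def[symmetric]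
    using Qtc inv isl hypAt adj h2t iii by simp
qed

end
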